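(* Let $K$ be a field of characteristic $0$, let $S=K[x_1,\ldots,x_n]$ be graded by $\deg x_i=a_i>0$, and let $I\subsetneq S$ be a graded ideal which is strongly Golod, i.e. $\partial(I)^2\subseteq I$, where $\partial(I)$ is the ideal generated by all $\partial f/\partial x_i$ with $f\in I$, $1\le i\le n$. Then for each minimal prime ideal $P$ of $I$, the (uniquely determined) $P$-primary component $Q$ of $I$ is strongly Golod, i.e. $\partial(Q)^2\subseteq Q$. *)

theory Defs
  imports Main "HOL-Library.Poly_Mapping"
begin

text \<open>Polynomial ring K[x_v | v in 'v] (with 'v finite) represented as
  finitely supported maps from monomials (exponent vectors 'v =>0 nat) to coefficients.\<close>

type_synonym ('v, 'a) mpoly = "('v \<Rightarrow>\<^sub>0 nat) \<Rightarrow>\<^sub>0 'a"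

definition is_ideal :: "'r::comm_ring_1 set \<Rightarrow> bool" where
  "is_ideal I \<longleftrightarrow> 0 \<in> I \<and> (\<forall>f\<in>I. \<forall>g\<in>I. f + g \<in> I) \<and> (\<forall>f\<in>I. \<forall>r. r * f \<in> I)"

definition ideal_gen :: "'r::comm_ring_1 set \<Rightarrow> 'r set" where
  "ideal_gen G = \<Inter>{I. is_ideal I \<and> G \<subseteq> I}"

definition ideal_prod :: "'r::comm_ring_1 set \<Rightarrow> 'r set \<Rightarrow> 'r set" where
  "ideal_prod I J = ideal_gen {f * g | f g. f \<in> I \<and> g \<in> J}"

definition prime_ideal :: "'r::comm_ring_1 set \<Rightarrow> bool" where
  "prime_ideal P \<longleftrightarrow> is_ideal P \<and> P \<noteq> UNIV \<and> (\<forall>a b. a * b \<in> P \<longrightarrow> a \<in> P \<or> b \<in> P)"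

definition primary_ideal :: "'r::comm_ring_1 set \<Rightarrow> bool" where
  "primary_ideal Q \<longleftrightarrow> is_ideal Q \<and> Q \<noteq> UNIV \<and>
     (\<forall>a b. a * b \<in> Q \<longrightarrow> a \<in> Q \<or> (\<exists>n. b ^ n \<in> Q))"

definition ideal_radical :: "'r::comm_ring_1 set \<Rightarrow> 'r set" where
  "ideal_radical I = {f. \<exists>n. f ^ n \<in> I}"

definition minimal_prime :: "'r::comm_ring_1 set \<Rightarrow> 'r set \<Rightarrow> bool" where
  "minimal_prime P I \<longleftrightarrow> prime_ideal P \<and> I \<subseteq> P \<and>
     (\<forall>P'. prime_ideal P' \<and> I \<subseteq> P' \<and> P' \<subseteq> P \<longrightarrow> P' = P)"

definition minimal_primary_decomposition :: "'r::comm_ring_1 set set \<Rightarrow> 'r set \<Rightarrow> bool" where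
  "minimal_primary_decomposition \<Q> I \<longleftrightarrow> finite \<Q> \<and> \<Q> \<noteq> {} \<and>
     (\<forall>Q\<in>\<Q>. primary_ideal Q) \<and> \<Inter>\<Q> = I \<and>
     (\<forall>Q1\<in>\<Q>. \<forall>Q2\<in>\<Q>. ideal_radical Q1 = ideal_radical Q2 \<longrightarrow> Q1 = Q2) \<and>
     (\<forall>Q\<in>\<Q>. \<Inter>(\<Q> - {Q}) \<noteq> I)"

definition pdiff :: "'v \<Rightarrow> ('v, 'a::comm_ring_1) mpoly \<Rightarrow> ('v, 'a) mpoly" where
  "pdiff i f = (\<Sum>m\<in>Poly_Mapping.keys f. Poly_Mapping.single (m - Poly_Mapping.single i (1::nat))
                   (of_nat (Poly_Mapping.lookup m i) * Poly_Mapping.lookup f m))"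

definition deriv_ideal :: "('v, 'a::comm_ring_1) mpoly set \<Rightarrow> ('v, 'a) mpoly set" where
  "deriv_ideal I = ideal_gen {pdiff i f | i f. f \<in> I}"

definition strongly_golod :: "('v, 'a::comm_ring_1) mpoly set \<Rightarrow> bool" where
  "strongly_golod I \<longleftrightarrow> ideal_prod (deriv_ideal I) (deriv_ideal I) \<subseteq> I"

definition wdeg :: "('v::finite \<Rightarrow> nat) \<Rightarrow> ('v \<Rightarrow>\<^sub>0 nat) \<Rightarrow> nat" where
  "wdeg a m = (\<Sum>v\<in>UNIV. a v * Poly_Mapping.lookup m v)"

definition hom_component :: "('v::finite \<Rightarrow> nat) \<Rightarrow> nat \<Rightarrow> ('v, 'a::comm_ring_1) mpoly \<Rightarrow> ('v, 'a) mpoly" where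
  "hom_component a d f = (\<Sum>m\<in>{m\<in>Poly_Mapping.keys f. wdeg a m = d}. Poly_Mapping.single m (Poly_Mapping.lookup f m))"

definition graded_ideal :: "('v::finite \<Rightarrow> nat) \<Rightarrow> ('v, 'a::comm_ring_1) mpoly set \<Rightarrow> bool" where
  "graded_ideal a I \<longleftrightarrow> is_ideal I \<and> (\<forall>f\<in>I. \<forall>d. hom_component a d f \<in> I)"

end

theory Submission
  imports Defs
begin

lemma monom_sub_add:
  assumes "Poly_Mapping.lookup n i \<ge> (1::nat)"
  shows "m + (n - Poly_Mapping.single i (1::nat)) = (m + n) - Poly_Mapping.single i 1"
  by (rule poly_mapping_eqI) (use assms in \<open>auto simp: lookup_add lookup_minus lookup_single when_def\<close>)

lemma pdiff_single:
  "pdiff i (Poly_Mapping.single m c) = Poly_Mapping.single (m - Poly_Mapping.single i 1) (of_nat (Poly_Mapping.lookup m i) * c)"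
  by (cases "c = 0") (simp_all add: pdiff_def)

lemma pdiff_zero[simp]: "pdiff i 0 = 0"
  by (simp add: pdiff_def)

lemma lookup_pdiff:
  "Poly_Mapping.lookup (pdiff i f) k = of_nat (Poly_Mapping.lookup k i + 1) * Poly_Mapping.lookup f (k + Poly_Mapping.single i 1)"
proof -
  let ?e = "Poly_Mapping.single i (1::nat)"
  have key: "m - ?e = k \<Longrightarrow> m \<noteq> k + ?e \<Longrightarrow> Poly_Mapping.lookup m i = 0" for m
  proof (rule ccontr)
    assume a: "m - ?e = k" "m \<noteq> k + ?e" "Poly_Mapping.lookup m i \<noteq> 0"
    have "m = k + ?e" unfolding a(1)[symmetric]
      by (rule poly_mapping_eqI) (use a(3) in \<open>auto simp: lookup_add lookup_minus lookup_single when_def\<close>)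
    with a show False by simp
  qed
  have km: "(k + ?e) - ?e = k"
    by (rule poly_mapping_eqI) (auto simp: lookup_add lookup_minus lookup_single when_def)
  have li: "Poly_Mapping.lookup (k + ?e) i = Poly_Mapping.lookup k i + 1" by (simp add: lookup_add)
  have "Poly_Mapping.lookup (pdiff i f) k = (\<Sum>m\<in>Poly_Mapping.keys f. (of_nat (Poly_Mapping.lookup m i) * Poly_Mapping.lookup f m) when m - ?e = k)"
    by (simp add: pdiff_def lookup_sum lookup_single)
  also have "\<dots> = (\<Sum>m\<in>Poly_Mapping.keys f. if m = k + ?e then of_nat (Poly_Mapping.lookup k i + 1) * Poly_Mapping.lookup f (k + ?e) else 0)"
  proof (rule sum.cong[OF refl])
    fix m assume "m \<in> Poly_Mapping.keys f"
    show "((of_nat (Poly_Mapping.lookup m i) * Poly_Mapping.lookup f m) when m - ?e = k) =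
      (if m = k + ?e then of_nat (Poly_Mapping.lookup k i + 1) * Poly_Mapping.lookup f (k + ?e) else 0)"
    proof (cases "m = k + ?e")
      case True thus ?thesis by (simp add: when_def km lookup_add)
    next
      case False thus ?thesis using key[of m] by (auto simp: when_def)
    qed
  qed
  also have "\<dots> = of_nat (Poly_Mapping.lookup k i + 1) * Poly_Mapping.lookup f (k + ?e)"
    by (auto simp: in_keys_iff)
  finally show ?thesis .
qed

lemma pdiff_add: "pdiff i (f + g) = pdiff i f + pdiff i g"
  by (rule poly_mapping_eqI) (simp add: lookup_pdiff lookup_add algebra_simps)

lemma pdiff_sum: "pdiff i (sum F A) = (\<Sum>x\<in>A. pdiff i (F x))"
  by (induction A rule: infinite_finite_induct) (simp_all add: pdiff_add)

lemma mpoly_expand: "f = (\<Sum>m\<in>Poly_Mapping.keys f. Poly_Mapping.single m (Poly_Mapping.lookup f m))"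
  by (rule poly_mapping_eqI) (auto simp: lookup_sum lookup_single when_def in_keys_iff)

lemma pdiff_mult_single:
  "pdiff i (Poly_Mapping.single m a * Poly_Mapping.single n b :: ('v,'a::comm_ring_1) mpoly) =
     Poly_Mapping.single m a * pdiff i (Poly_Mapping.single n b) + Poly_Mapping.single n b * pdiff i (Poly_Mapping.single m a)"
proof -
  let ?e = "Poly_Mapping.single i (1::nat)"
  have A: "Poly_Mapping.single m a * pdiff i (Poly_Mapping.single n b) = 
      Poly_Mapping.single (m + n - ?e) (of_nat (Poly_Mapping.lookup n i) * (a * b))"
  proof (cases "Poly_Mapping.lookup n i = 0")
    case True thus ?thesis by (simp add: pdiff_single)
  next
    case False thus ?thesis using monom_sub_add[of n i m] by (simp add: pdiff_single mult_single algebra_simps)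
  qed
  have B: "Poly_Mapping.single n b * pdiff i (Poly_Mapping.single m a) = 
      Poly_Mapping.single (m + n - ?e) (of_nat (Poly_Mapping.lookup m i) * (a * b))"
  proof (cases "Poly_Mapping.lookup m i = 0")
    case True thus ?thesis by (simp add: pdiff_single)
  next
    case False thus ?thesis using monom_sub_add[of m i n] by (simp add: pdiff_single mult_single algebra_simps)
  qed
  show ?thesis unfolding A B
    by (simp add: mult_single pdiff_single lookup_add single_add[symmetric] algebra_simps)
qed

lemma pdiff_mult:
  "pdiff i (f * g :: ('v,'a::comm_ring_1) mpoly) = f * pdiff i g + g * pdiff i f"
proof -
  define F where "F m = Poly_Mapping.single m (Poly_Mapping.lookup f m)" for m
  define G where "G m = Poly_Mapping.single m (Poly_Mapping.lookup g m)" for m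
  define Kf where "Kf = Poly_Mapping.keys f"
  define Kg where "Kg = Poly_Mapping.keys g"
  have f: "f = (\<Sum>m\<in>Kf. F m)" unfolding F_def Kf_def by (rule mpoly_expand)
  have g: "g = (\<Sum>m\<in>Kg. G m)" unfolding G_def Kg_def by (rule mpoly_expand)
  have "pdiff i (f * g) = (\<Sum>m\<in>Kf. \<Sum>n\<in>Kg. pdiff i (F m * G n))"
    by (simp add: f g sum_distrib_left sum_distrib_right pdiff_sum, rule sum.swap)
  also have "\<dots> = (\<Sum>m\<in>Kf. \<Sum>n\<in>Kg. F m * pdiff i (G n) + G n * pdiff i (F m))"
    unfolding F_def G_def by (simp add: pdiff_mult_single)
  also have "\<dots> = (\<Sum>m\<in>Kf. \<Sum>n\<in>Kg. F m * pdiff i (G n)) + (\<Sum>m\<in>Kf. \<Sum>n\<in>Kg. G n * pdiff i (F m))"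
    by (simp add: sum.distrib)
  also have "(\<Sum>m\<in>Kf. \<Sum>n\<in>Kg. F m * pdiff i (G n)) = f * pdiff i g"
    by (simp add: f g sum_distrib_left sum_distrib_right pdiff_sum, rule sum.swap)
  also have "(\<Sum>m\<in>Kf. \<Sum>n\<in>Kg. G n * pdiff i (F m)) = g * pdiff i f"
    by (simp add: f g sum_distrib_left sum_distrib_right pdiff_sum)
  finally show ?thesis .
qed

lemma ideal_gen_least: "is_ideal J \<Longrightarrow> G \<subseteq> J \<Longrightarrow> ideal_gen G \<subseteq> J"
  unfolding ideal_gen_def by blast

lemma ideal_gen_sup: "G \<subseteq> ideal_gen G"
  unfolding ideal_gen_def by blast

lemma ideal_neg: "is_ideal I \<Longrightarrow> f \<in> I \<Longrightarrow> - f \<in> I"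
  unfolding is_ideal_def by (metis mult_minus1)

lemma ideal_diff: "is_ideal I \<Longrightarrow> f \<in> I \<Longrightarrow> g \<in> I \<Longrightarrow> f - g \<in> I"
  using ideal_neg[of I g] unfolding is_ideal_def by (metis diff_conv_add_uminus)

lemma ideal_multr: "is_ideal I \<Longrightarrow> f \<in> I \<Longrightarrow> f * r \<in> I"
  unfolding is_ideal_def by (metis mult.commute)

lemma ideal_multl: "is_ideal I \<Longrightarrow> f \<in> I \<Longrightarrow> r * f \<in> I"
  unfolding is_ideal_def by blast

lemma ideal_prod_mem: "f \<in> I \<Longrightarrow> g \<in> J \<Longrightarrow> f * g \<in> ideal_prod I J"
proof -
  assume "f \<in> I" "g \<in> J"
  hence "f * g \<in> {f * g | f g. f \<in> I \<and> g \<in> J}" by blast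
  thus ?thesis unfolding ideal_prod_def by (rule subsetD[OF ideal_gen_sup])
qed

lemma prime_one: "prime_ideal P \<Longrightarrow> 1 \<notin> P"
  unfolding prime_ideal_def is_ideal_def by (metis UNIV_eq_I mult.right_neutral)

lemma prime_pow: "prime_ideal P \<Longrightarrow> x ^ n \<in> P \<Longrightarrow> x \<in> P"
proof (induction n)
  case 0 thus ?case unfolding prime_ideal_def is_ideal_def
    by (metis UNIV_eq_I mult.right_neutral power_0)
next
  case (Suc n) thus ?case unfolding prime_ideal_def by (metis power_Suc)
qed

lemma prime_prod:
  assumes "prime_ideal P" "finite A" "\<forall>x\<in>A. f x \<notin> P" shows "prod f A \<notin> P"
  using assms(2,3)
proof (induction A rule: finite_induct)
  case empty thus ?case using prime_one[OF assms(1)] by auto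
next
  case (insert x A) thus ?case using assms(1) unfolding prime_ideal_def by auto
qed

lemma ideal_sum: "is_ideal I \<Longrightarrow> (\<forall>x\<in>A. f x \<in> I) \<Longrightarrow> sum f A \<in> I"
  by (induction A rule: infinite_finite_induct) (auto simp: is_ideal_def)

lemma radical_primary_prime:
  assumes "primary_ideal Q" shows "prime_ideal (ideal_radical Q)"
proof -
  have Qi: "is_ideal Q" and QU: "Q \<noteq> UNIV" and pr: "\<And>a b. a * b \<in> Q \<Longrightarrow> a \<in> Q \<or> (\<exists>n. b ^ n \<in> Q)"
    using assms unfolding primary_ideal_def by blast+
  have one: "(1::'a) \<notin> Q"
  proof
    assume "(1::'a) \<in> Q"
    hence "r \<in> Q" for r using ideal_multl[OF Qi, of 1 r] by simp
    thus False using QU by blast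
  qed
  have pw2: "x ^ m \<in> Q \<Longrightarrow> m \<le> k \<Longrightarrow> x ^ k \<in> Q" for x m k
  proof -
    assume a: "x ^ m \<in> Q" "m \<le> k"
    have "x ^ k = x ^ (k - m + m)" using a(2) by simp
    also have "\<dots> = x ^ (k - m) * x ^ m" by (rule power_add)
    finally have "x ^ k = x ^ (k - m) * x ^ m" .
    thus ?thesis using ideal_multl[OF Qi a(1)] by simp
  qed
  have add: "x + y \<in> ideal_radical Q" if x: "x ^ m \<in> Q" and y: "y ^ n \<in> Q" for x y m n
  proof -
    have "(x + y) ^ (m + n) = (\<Sum>k\<le>m+n. of_nat (m + n choose k) * x ^ k * y ^ (m + n - k))"
      by (rule binomial_ring)
    also have "\<dots> \<in> Q"
    proof (rule ideal_sum[OF Qi], rule ballI)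
      fix k assume "k \<in> {..m+n}"
      show "of_nat (m + n choose k) * x ^ k * y ^ (m + n - k) \<in> Q"
      proof (cases "m \<le> k")
        case True
        have "x ^ k \<in> Q" using pw2[OF x True] .
        hence "(of_nat (m + n choose k) * x ^ k) * y ^ (m + n - k) \<in> Q"
          by (intro ideal_multr[OF Qi] ideal_multl[OF Qi])
        thus ?thesis .
      next
        case False hence "n \<le> m + n - k" by simp
        hence "y ^ (m + n - k) \<in> Q" by (rule pw2[OF y])
        thus ?thesis by (rule ideal_multl[OF Qi])
      qed
    qed
    finally show ?thesis unfolding ideal_radical_def by blast
  qed
  have "is_ideal (ideal_radical Q)"
    unfolding is_ideal_def
  proof (intro conjI ballI allI)
    have "(0::'a) ^ 1 \<in> Q" using Qi unfolding is_ideal_def by simp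
    thus "0 \<in> ideal_radical Q" unfolding ideal_radical_def by blast
  next
    fix f g assume "f \<in> ideal_radical Q" "g \<in> ideal_radical Q"
    thus "f + g \<in> ideal_radical Q" using add unfolding ideal_radical_def by blast
  next
    fix f r assume "f \<in> ideal_radical Q"
    then obtain n where "f ^ n \<in> Q" unfolding ideal_radical_def by blast
    hence "(r * f) ^ n \<in> Q" using ideal_multl[OF Qi] by (simp add: power_mult_distrib)
    thus "r * f \<in> ideal_radical Q" unfolding ideal_radical_def by blast
  qed
  moreover have "ideal_radical Q \<noteq> UNIV"
  proof
    assume "ideal_radical Q = UNIV"
    hence "(1::'a) \<in> ideal_radical Q" by simp
    then obtain n where "(1::'a) ^ n \<in> Q" unfolding ideal_radical_def by blast
    thus False using one by simp
  qed
  moreover have "a \<in> ideal_radical Q \<or> b \<in> ideal_radical Q" if ab: "a * b \<in> ideal_radical Q" for a b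
  proof -
    obtain n where "(a * b) ^ n \<in> Q" using ab unfolding ideal_radical_def by blast
    hence "a ^ n * b ^ n \<in> Q" by (simp add: power_mult_distrib)
    hence "a ^ n \<in> Q \<or> (\<exists>k. (b ^ n) ^ k \<in> Q)" using pr by blast
    thus ?thesis
    proof
      assume "a ^ n \<in> Q" thus ?thesis unfolding ideal_radical_def by blast
    next
      assume "\<exists>k. (b ^ n) ^ k \<in> Q"
      then obtain k where "(b ^ n) ^ k \<in> Q" by blast
      hence "b ^ (n * k) \<in> Q" by (simp add: power_mult)
      thus ?thesis unfolding ideal_radical_def by blast
    qed
  qed
  ultimately show ?thesis unfolding prime_ideal_def by (intro conjI allI impI)
qed

theorem corollary2p3:
  fixes a :: "'v::finite \<Rightarrow> nat"
    and I :: "('v, 'k::field_char_0) mpoly set"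
  assumes "\<forall>v. a v > 0"
    and "graded_ideal a I"
    and "I \<noteq> UNIV"
    and "strongly_golod I"
    and "minimal_prime P I"
    and "minimal_primary_decomposition \<Q> I"
    and "Q \<in> \<Q>"
    and "ideal_radical Q = P"
  shows "strongly_golod Q"
proof -
  have Pp: "prime_ideal P" and IP: "I \<subseteq> P"
    and Pmin: "\<And>P'. prime_ideal P' \<Longrightarrow> I \<subseteq> P' \<Longrightarrow> P' \<subseteq> P \<Longrightarrow> P' = P"
    using assms(5) unfolding minimal_prime_def by blast+
  have fin: "finite \<Q>" and prim: "\<And>Q'. Q' \<in> \<Q> \<Longrightarrow> primary_ideal Q'"
    and inter: "\<Inter>\<Q> = I"
    and uniq: "\<And>Q1 Q2. Q1 \<in> \<Q> \<Longrightarrow> Q2 \<in> \<Q> \<Longrightarrow> ideal_radical Q1 = ideal_radical Q2 \<Longrightarrow> Q1 = Q2"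
    using assms(6) unfolding minimal_primary_decomposition_def by blast+
  have Qi: "is_ideal Q" using prim[OF assms(7)] unfolding primary_ideal_def by blast
  have Qpr: "\<And>x y. x * y \<in> Q \<Longrightarrow> x \<in> Q \<or> (\<exists>n. y ^ n \<in> Q)"
    using prim[OF assms(7)] unfolding primary_ideal_def by blast
  have IQ: "I \<subseteq> Q" using inter assms(7) by blast
  have ex: "\<exists>s. s \<in> Q' \<and> s \<notin> P" if Q': "Q' \<in> \<Q> - {Q}" for Q'
  proof (rule ccontr)
    assume "\<not> ?thesis"
    hence sub: "Q' \<subseteq> P" by blast
    have rp: "prime_ideal (ideal_radical Q')" using prim Q' radical_primary_prime by blast
    have "ideal_radical Q' \<subseteq> P"
    proof
      fix x assume "x \<in> ideal_radical Q'"
      then obtain n where "x ^ n \<in> Q'" unfolding ideal_radical_def by blast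
      hence "x ^ n \<in> P" using sub by blast
      thus "x \<in> P" by (rule prime_pow[OF Pp])
    qed
    moreover have "I \<subseteq> ideal_radical Q'"
    proof
      fix x assume "x \<in> I"
      hence "x ^ 1 \<in> Q'" using inter Q' by auto
      thus "x \<in> ideal_radical Q'" unfolding ideal_radical_def by blast
    qed
    ultimately have "ideal_radical Q' = ideal_radical Q" using Pmin[OF rp] assms(8) by blast
    hence "Q' = Q" using uniq Q' assms(7) by blast
    thus False using Q' by blast
  qed
  obtain sf where sf: "\<And>Q'. Q' \<in> \<Q> - {Q} \<Longrightarrow> sf Q' \<in> Q' \<and> sf Q' \<notin> P"
    using ex by metis
  define s where "s = prod sf (\<Q> - {Q})"
  have sP: "s \<notin> P" unfolding s_def using prime_prod[OF Pp] fin sf by blast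
  have sI: "s * g \<in> I" if g: "g \<in> Q" for g
  proof -
    have "s * g \<in> Q''" if Q'': "Q'' \<in> \<Q>" for Q''
    proof (cases "Q'' = Q")
      case True thus ?thesis using ideal_multl[OF Qi g] by simp
    next
      case False
      hence mem: "Q'' \<in> \<Q> - {Q}" using Q'' by blast
      have Q''i: "is_ideal Q''" using prim[OF Q''] unfolding primary_ideal_def by blast
      have "s = sf Q'' * prod sf (\<Q> - {Q} - {Q''})"
        unfolding s_def using fin mem by (simp add: prod.remove)
      moreover have "sf Q'' * prod sf (\<Q> - {Q} - {Q''}) \<in> Q''"
        using sf[OF mem] by (intro ideal_multr[OF Q''i]) blast
      ultimately have "s \<in> Q''" by simp
      thus ?thesis by (rule ideal_multr[OF Q''i])
    qed
    thus ?thesis using inter by blast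
  qed
  have golI: "x * y \<in> I" if "x \<in> deriv_ideal I" "y \<in> deriv_ideal I" for x y
    by (rule subsetD[OF assms(4)[unfolded strongly_golod_def] ideal_prod_mem[OF that]])
  have dI: "pdiff i f \<in> deriv_ideal I" if "f \<in> I" for i f
    unfolding deriv_ideal_def by (rule subsetD[OF ideal_gen_sup]) (use that in blast)
  have key: "pdiff i q * pdiff j h \<in> Q" if q: "q \<in> Q" and h: "h \<in> Q" for i j q h
  proof -
    define A where "A = pdiff i (s * q)"
    define B where "B = pdiff j (s * h)"
    have eA: "s * pdiff i q = A - q * pdiff i s" unfolding A_def by (simp add: pdiff_mult)
    have eB: "s * pdiff j h = B - h * pdiff j s" unfolding B_def by (simp add: pdiff_mult)
    have AB: "A * B \<in> Q" using golI[OF dI[OF sI[OF q]] dI[OF sI[OF h]]] IQ unfolding A_def B_def by blast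
    have "(pdiff i q * pdiff j h) * (s * s) = (s * pdiff i q) * (s * pdiff j h)" by (simp add: algebra_simps)
    also have "\<dots> = A * B - (q * (pdiff i s * B) + h * (pdiff j s * A) - q * (h * (pdiff i s * pdiff j s)))"
      unfolding eA eB by (simp add: algebra_simps)
    also have "\<dots> \<in> Q"
    proof -
      have Qadd: "u \<in> Q \<Longrightarrow> v \<in> Q \<Longrightarrow> u + v \<in> Q" for u v using Qi unfolding is_ideal_def by blast
      have 1: "q * (pdiff i s * B) \<in> Q" by (rule ideal_multr[OF Qi q])
      have 2: "h * (pdiff j s * A) \<in> Q" by (rule ideal_multr[OF Qi h])
      have 3: "q * (h * (pdiff i s * pdiff j s)) \<in> Q" by (rule ideal_multr[OF Qi q])
      show ?thesis by (intro ideal_diff[OF Qi] AB Qadd 1 2 3)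
    qed
    finally have "(pdiff i q * pdiff j h) * (s * s) \<in> Q" .
    from Qpr[OF this] show ?thesis
    proof
      assume "\<exists>n. (s * s) ^ n \<in> Q"
      hence "s * s \<in> P" using assms(8) unfolding ideal_radical_def by blast
      hence "s \<in> P" using Pp unfolding prime_ideal_def by blast
      thus ?thesis using sP by blast
    qed
  qed
  define G where "G = {pdiff i f | i f. f \<in> Q}"
  define DQ where "DQ = deriv_ideal Q"
  have DQ_eq: "ideal_gen G = DQ" by (simp add: DQ_def deriv_ideal_def G_def)
  have Qadd: "u \<in> Q \<Longrightarrow> v \<in> Q \<Longrightarrow> u + v \<in> Q" for u v using Qi unfolding is_ideal_def by blast
  have Q0: "0 \<in> Q" using Qi unfolding is_ideal_def by blast
  have J1: "\<forall>y\<in>DQ. x * y \<in> Q" if xG: "x \<in> G" for x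
  proof -
    obtain i f where x: "x = pdiff i f" "f \<in> Q" using xG unfolding G_def by blast
    have "is_ideal {y. x * y \<in> Q}" unfolding is_ideal_def
    proof (intro conjI ballI allI)
      show "0 \<in> {y. x * y \<in> Q}" using Q0 by simp
    next
      fix u v assume "u \<in> {y. x * y \<in> Q}" "v \<in> {y. x * y \<in> Q}"
      thus "u + v \<in> {y. x * y \<in> Q}" using Qadd by (simp add: distrib_left)
    next
      fix u r assume "u \<in> {y. x * y \<in> Q}"
      hence "r * (x * u) \<in> Q" by (simp add: ideal_multl[OF Qi])
      thus "r * u \<in> {y. x * y \<in> Q}" by (simp add: mult.left_commute)
    qed
    moreover have "G \<subseteq> {y. x * y \<in> Q}" using key x unfolding G_def by blast
    ultimately have "ideal_gen G \<subseteq> {y. x * y \<in> Q}" by (rule ideal_gen_least)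
    thus "\<forall>y\<in>DQ. x * y \<in> Q" unfolding DQ_eq by blast
  qed
  have "is_ideal {x. \<forall>y\<in>DQ. x * y \<in> Q}" unfolding is_ideal_def
  proof (intro conjI ballI allI)
    show "0 \<in> {x. \<forall>y\<in>DQ. x * y \<in> Q}" using Q0 by simp
  next
    fix u v assume "u \<in> {x. \<forall>y\<in>DQ. x * y \<in> Q}" "v \<in> {x. \<forall>y\<in>DQ. x * y \<in> Q}"
    thus "u + v \<in> {x. \<forall>y\<in>DQ. x * y \<in> Q}" using Qadd by (simp add: distrib_right)
  next
    fix u r assume "u \<in> {x. \<forall>y\<in>DQ. x * y \<in> Q}"
    hence "\<forall>y\<in>DQ. r * (u * y) \<in> Q" by (simp add: ideal_multl[OF Qi])
    thus "r * u \<in> {x. \<forall>y\<in>DQ. x * y \<in> Q}" by (simp add: mult.assoc)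
  qed
  moreover have "G \<subseteq> {x. \<forall>y\<in>DQ. x * y \<in> Q}" using J1 by blast
  ultimately have "ideal_gen G \<subseteq> {x. \<forall>y\<in>DQ. x * y \<in> Q}" by (rule ideal_gen_least)
  hence "DQ \<subseteq> {x. \<forall>y\<in>DQ. x * y \<in> Q}" unfolding DQ_eq .
  hence "{f * g | f g. f \<in> DQ \<and> g \<in> DQ} \<subseteq> Q" by blast
  hence "ideal_prod DQ DQ \<subseteq> Q" unfolding ideal_prod_def by (rule ideal_gen_least[OF Qi])
  thus ?thesis unfolding strongly_golod_def DQ_def .
qed

end
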